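(* Let $\beta$ be a constant, $K$ a smooth positive function, $C(u)=\beta K(u)$, and $J(u)=\int K(u)\,du$ an antiderivative of $K$. Then the equation $C(u)u_t=z^{-2}\left(K(u)z^{2}u_z\right)_z$ ($z>0$) admits the Lie point symmetry generators $$\widehat Y_1=tz\partial_z+t^2\partial_t-\left(\frac{\beta}{4}z^2+\frac{3}{2}t\right)\frac{J(u)}{K(u)}\partial_u,\quad \widehat Y_2=\frac{z}{2}\partial_z+t\partial_t,\quad \widehat Y_3=\partial_t,$$ $$\widehat Y_4=t\partial_z-\left(\frac{\beta}{2}z+\frac{t}{z}\right)\frac{J(u)}{K(u)}\partial_u,\quad \widehat Y_5=\partial_z-\frac{1}{z}\frac{J(u)}{K(u)}\partial_u,\quad \widehat Y_6=-\frac{J(u)}{K(u)}\partial_u .$$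
   Context: Here $u=u(z,t)$. A vector field $Y=\xi\partial_z+\tau\partial_t+\eta\partial_u$ (coefficients depending on $z,t,u$) is an admitted Lie point symmetry generator of the equation if its second prolongation annihilates $C(u)u_t-K'(u)u_z^2-K(u)u_{zz}-\frac{2}{z}K(u)u_z$ on the solution manifold of the equation (equivalently, the one-parameter local group it generates maps solutions to solutions). *)

theory Defs
  imports "HOL-Analysis.Analysis"
begin

definition smooth_real :: "(real \<Rightarrow> real) \<Rightarrow> bool" where
  "smooth_real f \<longleftrightarrow> (\<forall>n x. ((deriv ^^ n) f) differentiable (at x))"

definition pz :: "(real \<Rightarrow> real \<Rightarrow> real \<Rightarrow> real) \<Rightarrow> real \<Rightarrow> real \<Rightarrow> real \<Rightarrow> real" where
  "pz f z t u = deriv (\<lambda>z'. f z' t u) z"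
definition pt :: "(real \<Rightarrow> real \<Rightarrow> real \<Rightarrow> real) \<Rightarrow> real \<Rightarrow> real \<Rightarrow> real \<Rightarrow> real" where
  "pt f z t u = deriv (\<lambda>t'. f z t' u) t"
definition pu :: "(real \<Rightarrow> real \<Rightarrow> real \<Rightarrow> real) \<Rightarrow> real \<Rightarrow> real \<Rightarrow> real \<Rightarrow> real" where
  "pu f z t u = deriv (\<lambda>u'. f z t u') u"

(* Prolongation coefficients of Y = xi d_z + tau d_t + eta d_u (standard formulas,
   eta^z = D_z eta - u_z D_z xi - u_t D_z tau, eta^t analogous,
   eta^zz = D_z eta^z - u_zz D_z xi - u_zt D_z tau, expanded).
   Jet coordinates: p = u_z, q = u_t, r = u_zz, s = u_zt. *)
definition prol_z where
  "prol_z xi tau eta z t u p q =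
     pz eta z t u + (pu eta z t u - pz xi z t u) * p - pz tau z t u * q
     - pu xi z t u * p^2 - pu tau z t u * p * q"

definition prol_t where
  "prol_t xi tau eta z t u p q =
     pt eta z t u - pt xi z t u * p + (pu eta z t u - pt tau z t u) * q
     - pu xi z t u * p * q - pu tau z t u * q^2"

definition prol_zz where
  "prol_zz xi tau eta z t u p q r s =
     pz (pz eta) z t u + (2 * pu (pz eta) z t u - pz (pz xi) z t u) * p
     - pz (pz tau) z t u * q
     + (pu (pu eta) z t u - 2 * pu (pz xi) z t u) * p^2
     - 2 * pu (pz tau) z t u * p * q
     - pu (pu xi) z t u * p^3
     - pu (pu tau) z t u * p^2 * q
     + (pu eta z t u - 2 * pz xi z t u) * r
     - 2 * pz tau z t u * s
     - 3 * pu xi z t u * p * r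
     - pu tau z t u * q * r
     - 2 * pu tau z t u * p * s"

(* Second prolongation of Y applied to a second-order differential function
   Delta(z,t,u,u_z,u_t,u_zz) (depending on no other second-order derivatives). *)
definition prol2_apply where
  "prol2_apply Delta xi tau eta z t u p q r s =
       xi z t u * deriv (\<lambda>z'. Delta z' t u p q r) z
     + tau z t u * deriv (\<lambda>t'. Delta z t' u p q r) t
     + eta z t u * deriv (\<lambda>u'. Delta z t u' p q r) u
     + prol_z xi tau eta z t u p q * deriv (\<lambda>p'. Delta z t u p' q r) p
     + prol_t xi tau eta z t u p q * deriv (\<lambda>q'. Delta z t u p q' r) q
     + prol_zz xi tau eta z t u p q r s * deriv (\<lambda>r'. Delta z t u p q r') r"

definition admits_symmetry where
  "admits_symmetry Delta xi tau eta \<longleftrightarrow>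
     (\<forall>z t u p q r s. z > 0 \<longrightarrow> Delta z t u p q r = 0 \<longrightarrow>
        prol2_apply Delta xi tau eta z t u p q r s = 0)"

definition heat_eq :: "(real \<Rightarrow> real) \<Rightarrow> (real \<Rightarrow> real) \<Rightarrow>
    real \<Rightarrow> real \<Rightarrow> real \<Rightarrow> real \<Rightarrow> real \<Rightarrow> real \<Rightarrow> real" where
  "heat_eq C K z t u p q r = C u * q - deriv K u * p^2 - K u * r - 2 / z * K u * p"

end

theory Submission
  imports Defs
begin

lemma deriv_pos_transform:
  assumes "z > 0" "\<And>y. y > 0 \<Longrightarrow> f y = h y" "(h has_real_derivative D) (at z)"
  shows "deriv f z = D"
proof -
  have "(f has_real_derivative D) (at z)"
    by (rule has_field_derivative_transform_within_open[of h D z "{0<..}"]) (use assms in auto)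
  then show ?thesis by (rule DERIV_imp_deriv)
qed

lemma gen:
  fixes X Xz Xzz Xt A Az Azz At :: "real \<Rightarrow> real \<Rightarrow> real" and T Tt :: "real \<Rightarrow> real"
    and K C J :: "real \<Rightarrow> real" and \<beta> :: real
  assumes dK: "\<And>u. (K has_real_derivative deriv K u) (at u)"
    and dK1: "\<And>u. (deriv K has_real_derivative deriv (deriv K) u) (at u)"
    and K_pos: "\<And>u. K u > 0"
    and C_def: "\<And>u. C u = \<beta> * K u"
    and J_anti: "\<And>u. (J has_real_derivative K u) (at u)"
    and hXz: "\<And>z t. z > 0 \<Longrightarrow> ((\<lambda>z. X z t) has_real_derivative Xz z t) (at z)"
    and hXzz: "\<And>z t. z > 0 \<Longrightarrow> ((\<lambda>z. Xz z t) has_real_derivative Xzz z t) (at z)"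
    and hXt: "\<And>z t. z > 0 \<Longrightarrow> ((\<lambda>t. X z t) has_real_derivative Xt z t) (at t)"
    and hT: "\<And>t. (T has_real_derivative Tt t) (at t)"
    and hAz: "\<And>z t. z > 0 \<Longrightarrow> ((\<lambda>z. A z t) has_real_derivative Az z t) (at z)"
    and hAzz: "\<And>z t. z > 0 \<Longrightarrow> ((\<lambda>z. Az z t) has_real_derivative Azz z t) (at z)"
    and hAt: "\<And>z t. z > 0 \<Longrightarrow> ((\<lambda>t. A z t) has_real_derivative At z t) (at t)"
    and c1: "\<And>z t. z > 0 \<Longrightarrow> Tt t = 2 * Xz z t"
    and c2: "\<And>z t. z > 0 \<Longrightarrow> 2 * Az z t = 2 * X z t / z^2 - 2 * Xz z t / z - \<beta> * Xt z t + Xzz z t"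
    and c3: "\<And>z t. z > 0 \<Longrightarrow> - (2/z) * Az z t + \<beta> * At z t - Azz z t = 0"
  shows "admits_symmetry (heat_eq C K) (\<lambda>z t u. X z t) (\<lambda>z t u. T t) (\<lambda>z t u. A z t * (J u / K u))"
proof -
  define K1 where "K1 = deriv K"
  define K2 where "K2 = deriv (deriv K)"
  define g where "g = (\<lambda>u. J u / K u)"
  define g1 where "g1 = (\<lambda>u. (K u * K u - J u * K1 u) / (K u * K u))"
  define g2 where "g2 = (\<lambda>u. ((K u * K1 u - J u * K2 u) * (K u * K u) - (K u * K u - J u * K1 u) * (2 * K u * K1 u)) / ((K u * K u) * (K u * K u)))"
  have Kne: "K u \<noteq> 0" for u using K_pos[of u] by simp
  have dg: "(g has_real_derivative g1 u) (at u)" for u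
    unfolding g_def g1_def K1_def
    by (rule derivative_eq_intros J_anti dK | use Kne in simp)+
  have dg1: "(g1 has_real_derivative g2 u) (at u)" for u
    unfolding g1_def g2_def K1_def K2_def
    by (rule derivative_eq_intros J_anti dK dK1 refl | use Kne in simp)+
  let ?xi = "\<lambda>z t u. X z t" and ?tau = "\<lambda>z t (u::real). T t" and ?eta = "\<lambda>z t u. A z t * (J u / K u)"
  have pxz: "pz ?xi z t u = Xz z t" if "z > 0" for z t u
    unfolding pz_def using hXz[OF that] by (rule DERIV_imp_deriv)
  have pxzz: "pz (pz ?xi) z t u = Xzz z t" if "z > 0" for z t u
    unfolding pz_def[of "pz ?xi"]
    by (rule deriv_pos_transform[OF that _ hXzz[OF that]]) (simp add: pxz)
  have pxt: "pt ?xi z t u = Xt z t" if "z > 0" for z t u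
    unfolding pt_def using hXt[OF that] by (rule DERIV_imp_deriv)
  have pxu: "pu ?xi z t u = 0" for z t u by (simp add: pu_def)
  have pxzu: "pu (pz ?xi) z t u = 0" for z t u by (simp add: pu_def pz_def)
  have pxuu: "pu (pu ?xi) z t u = 0" for z t u by (simp add: pu_def)
  have ptz: "pz ?tau z t u = 0" for z t u by (simp add: pz_def)
  have ptzz: "pz (pz ?tau) z t u = 0" for z t u by (simp add: pz_def)
  have ptt: "pt ?tau z t u = Tt t" for z t u unfolding pt_def using hT by (rule DERIV_imp_deriv)
  have ptu: "pu ?tau z t u = 0" for z t u by (simp add: pu_def)
  have ptzu: "pu (pz ?tau) z t u = 0" for z t u by (simp add: pu_def pz_def)
  have ptuu: "pu (pu ?tau) z t u = 0" for z t u by (simp add: pu_def)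
  have pez: "pz ?eta z t u = Az z t * g u" if "z > 0" for z t u
    unfolding pz_def g_def
    by (rule DERIV_imp_deriv) (rule derivative_eq_intros hAz[OF that] | simp)+
  have pet: "pt ?eta z t u = At z t * g u" if "z > 0" for z t u
    unfolding pt_def g_def
    by (rule DERIV_imp_deriv) (rule derivative_eq_intros hAt[OF that] | simp)+
  have peu: "pu ?eta z t u = A z t * g1 u" for z t u
    unfolding pu_def
    by (rule DERIV_imp_deriv) (rule derivative_eq_intros dg[unfolded g_def] | simp)+
  have pezz: "pz (pz ?eta) z t u = Azz z t * g u" if "z > 0" for z t u
    unfolding pz_def[of "pz ?eta"]
    by (rule deriv_pos_transform[OF that _ DERIV_cmult_right[OF hAzz[OF that]]]) (rule pez)
  have pezu: "pu (pz ?eta) z t u = Az z t * g1 u" if "z > 0" for z t u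
    unfolding pu_def pez[OF that]
    by (rule DERIV_imp_deriv) (rule derivative_eq_intros dg | simp)+
  have peuu: "pu (pu ?eta) z t u = A z t * g2 u" for z t u
    unfolding pu_def[of "pu ?eta"] peu
    by (rule DERIV_imp_deriv) (rule derivative_eq_intros dg1 | simp)+
  show ?thesis
    unfolding admits_symmetry_def
  proof (intro allI impI)
    fix z t u p q r s :: real
    assume zp: "z > 0" and eq: "heat_eq C K z t u p q r = 0"
    have Dz: "deriv (\<lambda>z'. heat_eq C K z' t u p q r) z = 2 / z^2 * K u * p"
      unfolding heat_eq_def
      by (rule DERIV_imp_deriv) (rule derivative_eq_intros refl | use zp in \<open>simp add: power2_eq_square field_simps\<close>)+
    show "prol2_apply (heat_eq C K) ?xi ?tau ?eta z t u p q r s = 0"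
    proof -
      have Dt: "deriv (\<lambda>t'. heat_eq C K z t' u p q r) t = 0"
        unfolding heat_eq_def by simp
      have Du: "deriv (\<lambda>u'. heat_eq C K z t u' p q r) u = \<beta> * K1 u * q - K2 u * p^2 - K1 u * r - 2 / z * K1 u * p"
        unfolding heat_eq_def C_def K1_def K2_def
        by (rule DERIV_imp_deriv) (rule derivative_eq_intros dK dK1 refl | simp)+
      have Dp: "deriv (\<lambda>p'. heat_eq C K z t u p' q r) p = - 2 * K1 u * p - 2 / z * K u"
        unfolding heat_eq_def K1_def
        by (rule DERIV_imp_deriv) (rule derivative_eq_intros refl | simp)+
      have Dq: "deriv (\<lambda>q'. heat_eq C K z t u p q' r) q = \<beta> * K u"
        unfolding heat_eq_def C_def
        by (rule DERIV_imp_deriv) (rule derivative_eq_intros refl | simp)+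
      have Dr: "deriv (\<lambda>r'. heat_eq C K z t u p q r') r = - K u"
        unfolding heat_eq_def
        by (rule DERIV_imp_deriv) (rule derivative_eq_intros refl | simp)+
      have rr: "r = (\<beta> * K u * q - K1 u * p^2 - 2 / z * K u * p) / K u"
        using eq Kne[of u] unfolding heat_eq_def C_def K1_def by (simp add: field_simps)
      have e1: "Tt t = 2 * Xz z t" using c1[OF zp] .
      have e2: "Az z t = (2 * X z t / z^2 - 2 * Xz z t / z - \<beta> * Xt z t + Xzz z t) / 2" using c2[OF zp, of t] by simp
      have e3: "Azz z t = - (2/z) * Az z t + \<beta> * At z t" using c3[OF zp, of t] by simp
      have "prol2_apply (heat_eq C K) ?xi ?tau ?eta z t u p q r s =
         X z t * (2 / z^2 * K u * p) + A z t * g u * (\<beta> * K1 u * q - K2 u * p^2 - K1 u * r - 2 / z * K1 u * p)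
         + (Az z t * g u + (A z t * g1 u - Xz z t) * p) * (- 2 * K1 u * p - 2 / z * K u)
         + (At z t * g u - Xt z t * p + (A z t * g1 u - Tt t) * q) * (\<beta> * K u)
         + (Azz z t * g u + (2 * (Az z t * g1 u) - Xzz z t) * p + (A z t * g2 u) * p^2 + (A z t * g1 u - 2 * Xz z t) * r) * (- K u)"
        unfolding prol2_apply_def prol_z_def prol_t_def prol_zz_def
        by (simp only: Dz Dt Du Dp Dq Dr pxz[OF zp] pxzz[OF zp] pxt[OF zp] pxu pxzu pxuu ptz ptzz ptt ptu ptzu ptuu
              pez[OF zp] pet[OF zp] peu pezz[OF zp] pezu[OF zp] peuu g_def[symmetric]) (simp add: g_def algebra_simps)
      also have "\<dots> = 0"
        unfolding rr e1 e3 e2 g_def g1_def g2_def using Kne[of u] zp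
        by (simp add: field_simps) (simp add: algebra_simps power2_eq_square power3_eq_cube)
      finally show ?thesis .
    qed
  qed
qed
theorem mainTheorem5:
  fixes \<beta> :: real and K C J :: "real \<Rightarrow> real"
  assumes K_smooth: "smooth_real K"
    and K_pos: "\<And>u. K u > 0"
    and C_def: "\<And>u. C u = \<beta> * K u"
    and J_anti: "\<And>u. (J has_real_derivative K u) (at u)"
  shows
    "(admits_symmetry (heat_eq C K)
        (\<lambda>z t u. t * z) (\<lambda>z t u. t^2)
        (\<lambda>z t u. - (\<beta> / 4 * z^2 + 3 / 2 * t) * (J u / K u))) \<and>
     (admits_symmetry (heat_eq C K)
        (\<lambda>z t u. z / 2) (\<lambda>z t u. t) (\<lambda>z t u. 0)) \<and>
     (admits_symmetry (heat_eq C K)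
        (\<lambda>z t u. 0) (\<lambda>z t u. 1) (\<lambda>z t u. 0)) \<and>
     (admits_symmetry (heat_eq C K)
        (\<lambda>z t u. t) (\<lambda>z t u. 0)
        (\<lambda>z t u. - (\<beta> / 2 * z + t / z) * (J u / K u))) \<and>
     (admits_symmetry (heat_eq C K)
        (\<lambda>z t u. 1) (\<lambda>z t u. 0) (\<lambda>z t u. - (1 / z) * (J u / K u))) \<and>
     (admits_symmetry (heat_eq C K)
        (\<lambda>z t u. 0) (\<lambda>z t u. 0) (\<lambda>z t u. - (J u / K u)))"
proof -
  have dK: "\<And>u. (K has_real_derivative deriv K u) (at u)"
    using K_smooth[unfolded smooth_real_def, rule_format, of 0]
    by (simp add: DERIV_deriv_iff_real_differentiable)
  have dK1: "\<And>u. (deriv K has_real_derivative deriv (deriv K) u) (at u)"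
    using K_smooth[unfolded smooth_real_def, rule_format, of 1]
    by (simp add: DERIV_deriv_iff_real_differentiable)
  note G = gen[OF dK dK1 K_pos C_def J_anti]
  have s1: "admits_symmetry (heat_eq C K)
        (\<lambda>z t u. t * z) (\<lambda>z t u. t^2)
        (\<lambda>z t u. - (\<beta> / 4 * z^2 + 3 / 2 * t) * (J u / K u))"
    by (rule G[where Xz="\<lambda>z t. t" and Xzz="\<lambda>z t. 0" and Xt="\<lambda>z t. z" and Tt="\<lambda>t. 2*t"
        and Az="\<lambda>z t. -(\<beta>/2*z)" and Azz="\<lambda>z t. -\<beta>/2" and At="\<lambda>z t. -3/2"]) (auto intro!: derivative_eq_intros simp: dK dK1 K_pos C_def J_anti field_simps power2_eq_square power3_eq_cube)
  have s2: "admits_symmetry (heat_eq C K)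
        (\<lambda>z t u. z / 2) (\<lambda>z t u. t) (\<lambda>z t u. 0 * (J u / K u))"
    by (rule G[where Xz="\<lambda>z t. 1/2" and Xzz="\<lambda>z t. 0" and Xt="\<lambda>z t. 0" and Tt="\<lambda>t. 1"
        and Az="\<lambda>z t. 0" and Azz="\<lambda>z t. 0" and At="\<lambda>z t. 0"]) (auto intro!: derivative_eq_intros simp: dK dK1 K_pos C_def J_anti field_simps power2_eq_square power3_eq_cube)
  have s3: "admits_symmetry (heat_eq C K)
        (\<lambda>z t u. 0) (\<lambda>z t u. 1) (\<lambda>z t u. 0 * (J u / K u))"
    by (rule G[where Xz="\<lambda>z t. 0" and Xzz="\<lambda>z t. 0" and Xt="\<lambda>z t. 0" and Tt="\<lambda>t. 0"
        and Az="\<lambda>z t. 0" and Azz="\<lambda>z t. 0" and At="\<lambda>z t. 0"]) (auto intro!: derivative_eq_intros simp: dK dK1 K_pos C_def J_anti field_simps power2_eq_square power3_eq_cube)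
  have s4: "admits_symmetry (heat_eq C K)
        (\<lambda>z t u. t) (\<lambda>z t u. 0)
        (\<lambda>z t u. - (\<beta> / 2 * z + t / z) * (J u / K u))"
    by (rule G[where Xz="\<lambda>z t. 0" and Xzz="\<lambda>z t. 0" and Xt="\<lambda>z t. 1" and Tt="\<lambda>t. 0"
        and Az="\<lambda>z t. -(\<beta>/2) + t/z^2" and Azz="\<lambda>z t. -2*t/z^3" and At="\<lambda>z t. -1/z"]) (auto intro!: derivative_eq_intros simp: dK dK1 K_pos C_def J_anti field_simps power2_eq_square power3_eq_cube)
  have s5: "admits_symmetry (heat_eq C K)
        (\<lambda>z t u. 1) (\<lambda>z t u. 0) (\<lambda>z t u. - (1 / z) * (J u / K u))"
    by (rule G[where Xz="\<lambda>z t. 0" and Xzz="\<lambda>z t. 0" and Xt="\<lambda>z t. 0" and Tt="\<lambda>t. 0"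
        and Az="\<lambda>z t. 1/z^2" and Azz="\<lambda>z t. -2/z^3" and At="\<lambda>z t. 0"]) (auto intro!: derivative_eq_intros simp: dK dK1 K_pos C_def J_anti field_simps power2_eq_square power3_eq_cube)
  have s6: "admits_symmetry (heat_eq C K)
        (\<lambda>z t u. 0) (\<lambda>z t u. 0) (\<lambda>z t u. (-1) * (J u / K u))"
    by (rule G[where Xz="\<lambda>z t. 0" and Xzz="\<lambda>z t. 0" and Xt="\<lambda>z t. 0" and Tt="\<lambda>t. 0"
        and Az="\<lambda>z t. 0" and Azz="\<lambda>z t. 0" and At="\<lambda>z t. 0"]) (auto intro!: derivative_eq_intros simp: dK dK1 K_pos C_def J_anti field_simps power2_eq_square power3_eq_cube)
  show ?thesis using s1 s2 s3 s4 s5 s6 by simp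
qed

end
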